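(* For every $n \geq 1$, every $c \in \{1,\ldots,n\}$, every $p=(p_1,\ldots,p_n) \in (0,1)^n$ with $p_1+\cdots+p_n \leq 1$, and every integer $k \geq 0$, $$\Pr\{T_{c,n}(p) > k\} = \sum_{i=0}^{c-1} (-1)^{c-1-i} \binom{n-i-1}{n-c} \sum_{J \in S_{i,n}} (p_0 + P_J)^k.$$
   Context: Let $p=(p_1,\ldots,p_n)$ with $p_i \in (0,1)$ and $p_1+\cdots+p_n \le 1$, and set $p_0 = 1-(p_1+\cdots+p_n)$. Coupons are drawn independently, one at each time $1,2,\ldots$, from $\{0,1,\ldots,n\}$, coupon $i$ being drawn with probability $p_i$; coupon $0$ (the null coupon) never belongs to the collection. For $1 \le c \le n$, $T_{c,n}(p)$ is the number of draws needed until, for the first time, $c$ distinct coupons among $\{1,\ldots,n\}$ have been drawn. For $J \subseteq \{1,\ldots,n\}$, $P_J = \sum_{j\in J} p_j$ with $P_\emptyset = 0$, and $S_{i,n} = \{J \subseteq \{1,\ldots,n\} : |J| = i\}$. Convention: $0^0=1$. *)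

theory Defs
  imports "HOL-Probability.Probability" "HOL-Probability.Stream_Space"
begin

text \<open>Coupon distribution on {0,...,n}: coupon i (1 \<le> i \<le> n) has probability p i,
  the null coupon 0 has probability p_0 = 1 - (p 1 + ... + p n).\<close>
definition coupon_pmf :: "nat \<Rightarrow> (nat \<Rightarrow> real) \<Rightarrow> nat pmf" where
  "coupon_pmf n p = embed_pmf
     (\<lambda>i. if i = 0 then 1 - sum p {1..n} else if i \<le> n then p i else 0)"

text \<open>The i.i.d. sequence of draws; position j of the stream is the draw at time j+1.\<close>
definition coupon_space :: "nat \<Rightarrow> (nat \<Rightarrow> real) \<Rightarrow> nat stream measure" where
  "coupon_space n p = stream_space (measure_pmf (coupon_pmf n p))"

definition collected :: "nat \<Rightarrow> nat stream \<Rightarrow> nat \<Rightarrow> nat" where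
  "collected n \<omega> t = card ({\<omega> !! j | j. j < t} \<inter> {1..n})"

definition T_cn :: "nat \<Rightarrow> nat \<Rightarrow> nat stream \<Rightarrow> enat" where
  "T_cn c n \<omega> = (if \<exists>t. c \<le> collected n \<omega> t
                   then enat (LEAST t. c \<le> collected n \<omega> t) else \<infinity>)"

end

theory Submission imports Defs "HOL-Computational_Algebra.Formal_Power_Series" begin

lemma comb_core:
  fixes m M :: nat
  assumes "M < m"
  shows "(\<Sum>j=0..M. (-1::real)^(M-j) * real ((m-1-j) choose (M-j)) * real (m choose j)) = 1"
proof -
  have "(\<Sum>j=0..M. (-1::real)^(M-j) * real ((m-1-j) choose (M-j)) * real (m choose j))
      = (\<Sum>j=0..M. (real m gchoose j) * ((real M - real m) gchoose (M - j)))"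
  proof (rule sum.cong[OF refl])
    fix j assume j: "j \<in> {0..M}"
    have e: "(of_nat (M-j) - (real M - real m) - 1) = real (m-1-j)"
      using j assms by (simp add: of_nat_diff)
    have "((real M - real m) gchoose (M - j)) = (-1)^(M-j) * real ((m-1-j) choose (M-j))"
      by (subst gbinomial_negated_upper) (simp only: e binomial_gbinomial)
    then show "(-1::real)^(M-j) * real ((m-1-j) choose (M-j)) * real (m choose j)
       = (real m gchoose j) * ((real M - real m) gchoose (M - j))"
      by (simp add: binomial_gbinomial)
  qed
  also have "\<dots> = (real m + (real M - real m)) gchoose M"
    by (rule gbinomial_Vandermonde)
  also have "\<dots> = 1" by (simp add: binomial_gbinomial[symmetric])
  finally show ?thesis .
qed

lemma comb_ident:
  fixes n c d :: nat
  assumes "d < c" "c \<le> n"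
  shows "(\<Sum>i=0..c-1. (-1::real)^(c-1-i) * real ((n-i-1) choose (n-c)) *
            (if d \<le> i then real ((n-d) choose (i-d)) else 0)) = 1"
proof -
  let ?f = "\<lambda>i. (-1::real)^(c-1-i) * real ((n-i-1) choose (n-c)) *
            (if d \<le> i then real ((n-d) choose (i-d)) else 0)"
  have "(\<Sum>i=0..c-1. ?f i) = (\<Sum>i=d..c-1. ?f i)"
    by (rule sum.mono_neutral_right) (use assms in auto)
  also have "\<dots> = (\<Sum>i=0+d..(c-1-d)+d. ?f i)" using assms by simp
  also have "\<dots> = (\<Sum>j=0..c-1-d. ?f (j+d))" by (rule sum.shift_bounds_cl_nat_ivl)
  also have "\<dots> = (\<Sum>j=0..c-1-d. (-1::real)^((c-1-d)-j) * real (((n-d)-1-j) choose ((c-1-d)-j)) * real ((n-d) choose j))"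
  proof (rule sum.cong[OF refl])
    fix j assume j: "j \<in> {0..c-1-d}"
    have "(n-(j+d)-1) choose (n-c) = ((n-d)-1-j) choose (((n-d)-1-j) - (n-c))"
      using j assms by (subst binomial_symmetric) (auto simp: ac_simps)
    moreover have "((n-d)-1-j) - (n-c) = (c-1-d)-j" using j assms by auto
    moreover have "c-1-(j+d) = (c-1-d)-j" by simp
    ultimately show "?f (j+d) = (-1::real)^((c-1-d)-j) * real (((n-d)-1-j) choose ((c-1-d)-j)) * real ((n-d) choose j)"
      by (simp add: ac_simps)
  qed
  also have "\<dots> = 1" by (rule comb_core) (use assms in auto)
  finally show ?thesis .
qed

lemma count_supsets:
  fixes D :: "nat set"
  assumes "D \<subseteq> {1..n}"
  shows "card {J. J \<subseteq> {1..n} \<and> card J = i \<and> D \<subseteq> J}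
       = (if card D \<le> i then (n - card D) choose (i - card D) else 0)"
proof (cases "card D \<le> i")
  case False
  have "{J. J \<subseteq> {1..n} \<and> card J = i \<and> D \<subseteq> J} = {}"
  proof (rule ccontr)
    assume "\<not> ?thesis"
    then obtain J where "J \<subseteq> {1..n}" "card J = i" "D \<subseteq> J" by auto
    then have "card D \<le> i" using card_mono[of J D] finite_subset[of J "{1..n}"] by auto
    with False show False by simp
  qed
  with False show ?thesis by simp
next
  case True
  have fD: "finite D" using assms finite_subset by blast
  have eq: "{J. J \<subseteq> {1..n} \<and> card J = i \<and> D \<subseteq> J}
     = (\<lambda>K. K \<union> D) ` {K. K \<subseteq> {1..n} - D \<and> card K = i - card D}"
  proof (intro equalityI subsetI)
    fix J assume "J \<in> {J. J \<subseteq> {1..n} \<and> card J = i \<and> D \<subseteq> J}"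
    then have J: "J \<subseteq> {1..n}" "card J = i" "D \<subseteq> J" by auto
    have fJ: "finite J" using J(1) finite_subset by blast
    have "card (J - D) = i - card D" using J fD by (simp add: card_Diff_subset)
    moreover have "J = (J - D) \<union> D" using J by auto
    ultimately show "J \<in> (\<lambda>K. K \<union> D) ` {K. K \<subseteq> {1..n} - D \<and> card K = i - card D}"
      using J by blast
  next
    fix J assume "J \<in> (\<lambda>K. K \<union> D) ` {K. K \<subseteq> {1..n} - D \<and> card K = i - card D}"
    then obtain K where K: "K \<subseteq> {1..n} - D" "card K = i - card D" "J = K \<union> D" by auto
    have fK: "finite K" using K(1) finite_subset by blast
    have "card J = card K + card D" using K fK fD card_Un_disjoint[of K D] by auto
    then show "J \<in> {J. J \<subseteq> {1..n} \<and> card J = i \<and> D \<subseteq> J}" using K True assms by auto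
  qed
  have inj: "inj_on (\<lambda>K. K \<union> D) {K. K \<subseteq> {1..n} - D \<and> card K = i - card D}"
    by (rule inj_onI) blast
  have "card {J. J \<subseteq> {1..n} \<and> card J = i \<and> D \<subseteq> J}
      = card {K. K \<subseteq> {1..n} - D \<and> card K = i - card D}"
    unfolding eq by (rule card_image[OF inj])
  also have "\<dots> = card ({1..n} - D) choose (i - card D)" by (rule n_subsets) simp
  also have "card ({1..n} - D) = n - card D" using assms fD by (simp add: card_Diff_subset)
  finally show ?thesis using True by simp
qed

lemma pointwise:
  fixes D :: "nat set"
  assumes "D \<subseteq> {1..n}" "c \<le> n" "1 \<le> c"
  shows "(if card D < c then 1 else 0 :: real) =
    (\<Sum>i = 0..c-1. (-1) ^ (c - 1 - i) * real ((n - i - 1) choose (n - c)) *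
              (\<Sum>J \<in> {J. J \<subseteq> {1..n} \<and> card J = i}. if D \<subseteq> J then 1 else 0))"
proof -
  have s: "(\<Sum>J \<in> {J. J \<subseteq> {1..n} \<and> card J = i}. if D \<subseteq> J then 1 else 0 :: real)
     = (if card D \<le> i then real ((n - card D) choose (i - card D)) else 0)" for i
  proof -
    have fin: "finite {J. J \<subseteq> {1..n} \<and> card J = i}" by simp
    have "(\<Sum>J \<in> {J. J \<subseteq> {1..n} \<and> card J = i}. if D \<subseteq> J then 1 else 0 :: real)
        = real (card ({J. J \<subseteq> {1..n} \<and> card J = i} \<inter> {J. D \<subseteq> J}))"
      using sum.If_cases[OF fin, of "\<lambda>J. D \<subseteq> J" "\<lambda>_. 1::real" "\<lambda>_. 0"] by simp
    also have "{J. J \<subseteq> {1..n} \<and> card J = i} \<inter> {J. D \<subseteq> J} = {J. J \<subseteq> {1..n} \<and> card J = i \<and> D \<subseteq> J}"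
      by auto
    finally show ?thesis using count_supsets[OF assms(1), of i] by simp
  qed
  show ?thesis
  proof (cases "card D < c")
    case True
    show ?thesis unfolding s using comb_ident[OF True assms(2)] True by simp
  next
    case False
    then have "\<forall>i\<in>{0..c-1}. \<not> card D \<le> i" using assms(3) by auto
    then show ?thesis using False unfolding s by simp
  qed
qed

lemma stream_set_meas:
  "{\<omega> \<in> space (stream_space (measure_pmf q)). \<forall>j<k. \<omega> !! j \<in> S} \<in> sets (stream_space (measure_pmf q))"
proof -
  let ?Q = "stream_space (measure_pmf q)"
  have "{\<omega> \<in> space ?Q. \<forall>j\<in>{..<k}. \<omega> !! j \<in> S} \<in> sets ?Q"
  proof (rule sets.sets_Collect_finite_All)
    fix j
    have eq: "{\<omega> \<in> space ?Q. \<omega> !! j \<in> S} = (\<lambda>\<omega>. \<omega> !! j) -` S \<inter> space ?Q" by blast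
    have S: "S \<in> sets (measure_pmf q)" by (simp only: sets_measure_pmf UNIV_I)
    show "{\<omega> \<in> space ?Q. \<omega> !! j \<in> S} \<in> sets ?Q"
      unfolding eq by (rule measurable_sets[OF measurable_snth S])
  qed (rule finite_lessThan)
  then show ?thesis by (simp only: Ball_def lessThan_iff)
qed

lemma stream_prob:
  fixes q :: "'a pmf" and S :: "'a set"
  shows "emeasure (stream_space (measure_pmf q)) {\<omega> \<in> space (stream_space (measure_pmf q)). \<forall>j<k. \<omega> !! j \<in> S}
     = emeasure (measure_pmf q) S ^ k"
proof (induction k)
  case 0
  interpret S: prob_space "stream_space (measure_pmf q)"
    by (rule prob_space.prob_space_stream_space[OF prob_space_measure_pmf])
  show ?case by (simp add: S.emeasure_space_1)
next
  case (Suc k)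
  let ?Q = "stream_space (measure_pmf q)"
  have meas: "{\<omega> \<in> space ?Q. \<forall>j<m. \<omega> !! j \<in> S} \<in> sets ?Q" for m
    by (rule stream_set_meas)
  have e: "{x \<in> space ?Q. t ## x \<in> {\<omega> \<in> space ?Q. \<forall>j<Suc k. \<omega> !! j \<in> S}}
     = (if t \<in> S then {\<omega> \<in> space ?Q. \<forall>j<k. \<omega> !! j \<in> S} else {})" for t
    by (auto simp: space_stream_space All_less_Suc2)
  have "emeasure ?Q {\<omega> \<in> space ?Q. \<forall>j<Suc k. \<omega> !! j \<in> S}
     = (\<integral>\<^sup>+t. emeasure ?Q {x \<in> space ?Q. t ## x \<in> {\<omega> \<in> space ?Q. \<forall>j<Suc k. \<omega> !! j \<in> S}} \<partial>measure_pmf q)"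
    by (rule prob_space.emeasure_stream_space[OF prob_space_measure_pmf meas])
  also have "\<dots> = (\<integral>\<^sup>+t. emeasure ?Q {\<omega> \<in> space ?Q. \<forall>j<k. \<omega> !! j \<in> S} * indicator S t \<partial>measure_pmf q)"
    unfolding e by (intro nn_integral_cong) (auto split: split_indicator)
  also have "\<dots> = emeasure ?Q {\<omega> \<in> space ?Q. \<forall>j<k. \<omega> !! j \<in> S} * emeasure (measure_pmf q) S"
    by (subst nn_integral_cmult) auto
  finally show ?case using Suc by (simp add: mult.commute)
qed

theorem theorem1:
  fixes n c k :: nat and p :: "nat \<Rightarrow> real"
  assumes "n \<ge> 1"
    and "1 \<le> c" and "c \<le> n"
    and "\<forall>i\<in>{1..n}. 0 < p i \<and> p i < 1"
    and "sum p {1..n} \<le> 1"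
  shows "measure (coupon_space n p)
           {\<omega> \<in> space (coupon_space n p). T_cn c n \<omega> > enat k}
         = (\<Sum>i = 0..c-1. (-1) ^ (c - 1 - i) * real ((n - i - 1) choose (n - c)) *
              (\<Sum>J \<in> {J. J \<subseteq> {1..n} \<and> card J = i}.
                 ((1 - sum p {1..n}) + sum p J) ^ k))"
proof -
  define f where "f = (\<lambda>i. if i = 0 then 1 - sum p {1..n} else if i \<le> n then p i else 0)"
  have f_nonneg: "\<And>x. 0 \<le> f x" using assms by (auto simp: f_def less_imp_le)
  have f_int: "(\<integral>\<^sup>+x. ennreal (f x) \<partial>count_space UNIV) = 1"
  proof -
    have "(\<integral>\<^sup>+x. ennreal (f x) \<partial>count_space UNIV) = (\<Sum>x\<in>{0..n}. ennreal (f x))"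
      by (rule nn_integral_count_space') (auto simp: f_def)
    also have "\<dots> = ennreal (\<Sum>x\<in>{0..n}. f x)" using f_nonneg by simp
    also have "{0..n} = insert 0 {1..n}" by auto
    also have "(\<Sum>x\<in>insert 0 {1..n}. f x) = f 0 + (\<Sum>x\<in>{1..n}. f x)" by simp
    also have "(\<Sum>x\<in>{1..n}. f x) = sum p {1..n}" by (rule sum.cong) (auto simp: f_def)
    finally show ?thesis by (simp add: f_def)
  qed
  have pmf_q: "pmf (coupon_pmf n p) x = f x" for x
    unfolding coupon_pmf_def f_def[symmetric] by (rule pmf_embed_pmf[OF f_nonneg f_int])
  define q where "q = coupon_pmf n p"
  have Q: "coupon_space n p = stream_space (measure_pmf q)" by (simp add: coupon_space_def q_def)
  interpret Qp: prob_space "coupon_space n p" unfolding Q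
    by (rule prob_space.prob_space_stream_space[OF prob_space_measure_pmf])
  have spQ: "space (coupon_space n p) = UNIV" by (simp add: Q space_stream_space)
  define A where "A J = {\<omega> \<in> space (stream_space (measure_pmf q)). \<forall>j<k. \<omega> !! j \<in> UNIV - ({1..n} - J)}" for J
  have A_sets: "A J \<in> sets (coupon_space n p)" for J unfolding A_def Q by (rule stream_set_meas)
  have A_prob: "measure (coupon_space n p) (A J) = (1 - sum p {1..n} + sum p J)^k" if J: "J \<subseteq> {1..n}" for J
  proof -
    have "measure (measure_pmf q) ({1..n} - J) = sum (pmf q) ({1..n} - J)"
      by (rule measure_measure_pmf_finite) simp
    also have "\<dots> = sum p ({1..n} - J)" by (rule sum.cong) (auto simp: q_def pmf_q f_def)
    also have "\<dots> = sum p {1..n} - sum p J" using J by (simp add: sum_diff finite_subset)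
    finally have m1: "measure (measure_pmf q) ({1..n} - J) = sum p {1..n} - sum p J" .
    have m2: "measure (measure_pmf q) (UNIV - ({1..n} - J)) = 1 - sum p {1..n} + sum p J"
      using measure_pmf.prob_compl[of "{1..n} - J" q] m1 by simp
    have "0 \<le> sum p J" by (intro sum_nonneg) (use J assms(4) in force)
    then have nn: "0 \<le> 1 - sum p {1..n} + sum p J" using assms(5) by linarith
    have "ennreal (measure (coupon_space n p) (A J)) = emeasure (coupon_space n p) (A J)"
      by (simp add: Qp.emeasure_eq_measure)
    also have "\<dots> = emeasure (measure_pmf q) (UNIV - ({1..n} - J)) ^ k"
      unfolding Q A_def by (rule stream_prob)
    also have "\<dots> = ennreal ((1 - sum p {1..n} + sum p J)^k)"
      unfolding measure_pmf.emeasure_eq_measure m2 by (rule ennreal_power[OF nn])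
    finally show ?thesis using nn by simp
  qed
  define D where "D \<omega> = {\<omega> !! j | j. j < k} \<inter> {1..n}" for \<omega>
  have D_sub: "D \<omega> \<subseteq> {1..n}" for \<omega> by (auto simp: D_def)
  have T_iff: "T_cn c n \<omega> > enat k \<longleftrightarrow> card (D \<omega>) < c" for \<omega>
  proof -
    have mono: "collected n \<omega> t \<le> card (D \<omega>)" if "t \<le> k" for t
      unfolding collected_def D_def using that by (intro card_mono) auto
    have ck: "collected n \<omega> k = card (D \<omega>)" by (simp add: collected_def D_def)
    show ?thesis
    proof (cases "card (D \<omega>) < c")
      case True
      show ?thesis
      proof (cases "\<exists>t. c \<le> collected n \<omega> t")
        case ex: True
        have "\<not> (LEAST t. c \<le> collected n \<omega> t) \<le> k"
        proof
          assume le: "(LEAST t. c \<le> collected n \<omega> t) \<le> k"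
          have "c \<le> collected n \<omega> (LEAST t. c \<le> collected n \<omega> t)" by (rule LeastI_ex[OF ex])
          with mono[OF le] True show False by simp
        qed
        then show ?thesis using True ex by (simp add: T_cn_def)
      next
        case False
        then show ?thesis using True by (simp add: T_cn_def)
      qed
    next
      case False
      then have ex: "c \<le> collected n \<omega> k" using ck by simp
      then have "(LEAST t. c \<le> collected n \<omega> t) \<le> k" by (rule Least_le)
      then show ?thesis using False ex by (auto simp: T_cn_def)
    qed
  qed
  define E where "E = {\<omega> \<in> space (coupon_space n p). T_cn c n \<omega> > enat k}"
  define g where "g \<omega> = (\<Sum>i = 0..c-1. (-1) ^ (c - 1 - i) * real ((n - i - 1) choose (n - c)) *
              (\<Sum>J \<in> {J. J \<subseteq> {1..n} \<and> card J = i}. indicator (A J) \<omega>))" for \<omega>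
  have AD: "\<omega> \<in> A J \<longleftrightarrow> D \<omega> \<subseteq> J" if "J \<subseteq> {1..n}" for J \<omega>
    using that by (auto simp: A_def D_def space_stream_space)
  have ind: "indicator E \<omega> = g \<omega>" for \<omega>
  proof -
    have "indicator E \<omega> = (if card (D \<omega>) < c then 1 else 0 :: real)"
      by (simp add: E_def spQ T_iff indicator_def)
    also have "\<dots> = (\<Sum>i = 0..c-1. (-1) ^ (c - 1 - i) * real ((n - i - 1) choose (n - c)) *
              (\<Sum>J \<in> {J. J \<subseteq> {1..n} \<and> card J = i}. if D \<omega> \<subseteq> J then 1 else 0))"
      by (rule pointwise[OF D_sub assms(3) assms(2)])
    also have "\<dots> = g \<omega>"
    proof -
      have "(\<Sum>J \<in> {J. J \<subseteq> {1..n} \<and> card J = i}. if D \<omega> \<subseteq> J then 1 else 0 :: real)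
         = (\<Sum>J \<in> {J. J \<subseteq> {1..n} \<and> card J = i}. indicator (A J) \<omega>)" for i
        by (rule sum.cong) (auto simp: AD indicator_def)
      then show ?thesis unfolding g_def by (simp only:)
    qed
    finally show ?thesis .
  qed
  have int_A: "integrable (coupon_space n p) (indicator (A J) :: _ \<Rightarrow> real)" for J
    by (rule integrable_real_indicator[OF A_sets]) (metis Qp.emeasure_finite infinity_ennreal_def top.not_eq_extremum)
  have IE: "indicator E = g" by (rule ext) (rule ind)
  have "measure (coupon_space n p) E = integral\<^sup>L (coupon_space n p) (indicator E)"
    using spQ by simp
  also have "\<dots> = integral\<^sup>L (coupon_space n p) g" by (simp only: IE)
  also have "\<dots> = (\<Sum>i = 0..c-1. (-1) ^ (c - 1 - i) * real ((n - i - 1) choose (n - c)) *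
              (\<Sum>J \<in> {J. J \<subseteq> {1..n} \<and> card J = i}. measure (coupon_space n p) (A J)))"
  proof -
    have "integral\<^sup>L (coupon_space n p) g = (\<Sum>i = 0..c-1. integral\<^sup>L (coupon_space n p)
       (\<lambda>\<omega>. (-1) ^ (c - 1 - i) * real ((n - i - 1) choose (n - c)) *
              (\<Sum>J \<in> {J. J \<subseteq> {1..n} \<and> card J = i}. indicator (A J) \<omega>)))"
      unfolding g_def by (rule Bochner_Integration.integral_sum) (auto intro!: integrable_mult_right integrable_sum int_A)
    also have "\<dots> = (\<Sum>i = 0..c-1. (-1) ^ (c - 1 - i) * real ((n - i - 1) choose (n - c)) *
              (\<Sum>J \<in> {J. J \<subseteq> {1..n} \<and> card J = i}. integral\<^sup>L (coupon_space n p) (indicator (A J))))"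
    proof (rule sum.cong[OF refl])
      fix i
      show "integral\<^sup>L (coupon_space n p)
       (\<lambda>\<omega>. (-1) ^ (c - 1 - i) * real ((n - i - 1) choose (n - c)) *
              (\<Sum>J \<in> {J. J \<subseteq> {1..n} \<and> card J = i}. indicator (A J) \<omega>)) =
          (-1) ^ (c - 1 - i) * real ((n - i - 1) choose (n - c)) *
              (\<Sum>J \<in> {J. J \<subseteq> {1..n} \<and> card J = i}. integral\<^sup>L (coupon_space n p) (indicator (A J)))"
        by (subst integral_mult_right_zero) (subst Bochner_Integration.integral_sum, rule int_A, rule refl)
    qed
    also have "\<dots> = (\<Sum>i = 0..c-1. (-1) ^ (c - 1 - i) * real ((n - i - 1) choose (n - c)) *
              (\<Sum>J \<in> {J. J \<subseteq> {1..n} \<and> card J = i}. measure (coupon_space n p) (A J)))"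
      by (simp add: spQ)
    finally show ?thesis .
  qed
  also have "\<dots> = (\<Sum>i = 0..c-1. (-1) ^ (c - 1 - i) * real ((n - i - 1) choose (n - c)) *
              (\<Sum>J \<in> {J. J \<subseteq> {1..n} \<and> card J = i}. ((1 - sum p {1..n}) + sum p J) ^ k))"
  proof -
    have "(\<Sum>J \<in> {J. J \<subseteq> {1..n} \<and> card J = i}. measure (coupon_space n p) (A J))
       = (\<Sum>J \<in> {J. J \<subseteq> {1..n} \<and> card J = i}. ((1 - sum p {1..n}) + sum p J) ^ k)" for i
      by (rule sum.cong) (auto simp: A_prob)
    then show ?thesis by (simp only:)
  qed
  finally show ?thesis unfolding E_def .
qed

end
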